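(* Let $(X,r)$ be a finite non-degenerate solution. The group $(\mathcal{S},\circ)$ acts on $X$ by $(\sigma_a,\gamma_b)\cdot x=\sigma_a\lambda_b(x)$; more precisely, the map $(\mathcal{S},\circ)\to\mathrm{Sym}(X)$, $(\sigma_a,\gamma_b)\mapsto\sigma_a\lambda_b|_X$, is a well-defined group homomorphism.
   Context: A set-theoretic solution $(X,r)$ of the Yang--Baxter equation: $X$ non-empty, $r$ satisfies the braid relation $(r\times\mathrm{id})(\mathrm{id}\times r)(r\times\mathrm{id})=(\mathrm{id}\times r)(r\times\mathrm{id})(\mathrm{id}\times r)$; write $r(x,y)=(\lambda_x(y),\rho_y(x))$; non-degenerate means $r$ bijective and all $\lambda_x,\rho_y$ bijective. Put $\sigma_y(x)=\lambda_y\rho_{\lambda_x^{-1}(y)}(x)$. Let $A$ be the monoid $\langle X\mid x+y=y+\sigma_y(x)\rangle$, identified (via a known bijection fixing $X$) with the monoid $M=\langle X\mid x\circ y=\lambda_x(y)\circ\rho_y(x)\rangle$, so that $A$ carries operations $+$ and $\circ$ and maps $a\mapsto\lambda_a$ (monoid morphism $(A,\circ)\to\mathrm{Aut}(A,+)$), $a\mapsto\rho_a$ (anti-morphism of $(A,\circ)$), $a\mapsto\sigma_a$ (anti-morphism $(A,+)\to\mathrm{Aut}(A,+)$) extending those on $X$, with $a\circ b=a+\lambda_a(b)$, $a+b=b+\sigma_b(a)$, $\sigma_{\lambda_a(b)}\lambda_a=\lambda_a\sigma_b$; these maps leave $X$ invariant. For $a\in A$ let $\gamma_a=(\sigma_a^{-1},\lambda_a)$;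 $\mathcal{G}=\{\gamma_a:a\in A\}$ is a skew left brace with $\gamma_a+\gamma_b=\gamma_{a+b}$, $\gamma_a\circ\gamma_b=\gamma_{a\circ b}$ (well defined). Let $\mathcal{C}=\{\sigma_a:a\in A\}$, a group under composition ($\sigma_a\sigma_b=\sigma_{b+a}$), regarded as a trivial skew left brace (addition = composition). $\mathcal{S}=\mathcal{C}\rtimes\mathcal{G}$ is the set of pairs $(\sigma_a,\gamma_b)$ with componentwise addition and $(\sigma_a,\gamma_b)\circ(\sigma_c,\gamma_d)=(\sigma_a\sigma_{\lambda_b(c)},\gamma_{b\circ d})=(\sigma_{\lambda_b(c)+a},\gamma_{b\circ d})$. *)

theory Defs
  imports "HOL-Algebra.Bij"
begin

definition lam :: "('a \<times> 'a \<Rightarrow> 'a \<times> 'a) \<Rightarrow> 'a \<Rightarrow> 'a \<Rightarrow> 'a" where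
  "lam r x y = fst (r (x, y))"

definition rho :: "('a \<times> 'a \<Rightarrow> 'a \<times> 'a) \<Rightarrow> 'a \<Rightarrow> 'a \<Rightarrow> 'a" where
  "rho r y x = snd (r (x, y))"

definition r12 :: "('a \<times> 'a \<Rightarrow> 'a \<times> 'a) \<Rightarrow> 'a \<times> 'a \<times> 'a \<Rightarrow> 'a \<times> 'a \<times> 'a" where
  "r12 r t = (case t of (x, y, z) \<Rightarrow> (case r (x, y) of (u, v) \<Rightarrow> (u, v, z)))"

definition r23 :: "('a \<times> 'a \<Rightarrow> 'a \<times> 'a) \<Rightarrow> 'a \<times> 'a \<times> 'a \<Rightarrow> 'a \<times> 'a \<times> 'a" where
  "r23 r t = (case t of (x, y, z) \<Rightarrow> (case r (y, z) of (v, w) \<Rightarrow> (x, v, w)))"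

definition nondegenerate_solution :: "'a set \<Rightarrow> ('a \<times> 'a \<Rightarrow> 'a \<times> 'a) \<Rightarrow> bool" where
  "nondegenerate_solution X r \<longleftrightarrow>
     X \<noteq> {} \<and>
     (\<forall>p \<in> X \<times> X. r p \<in> X \<times> X) \<and>
     (\<forall>t \<in> X \<times> X \<times> X. r12 r (r23 r (r12 r t)) = r23 r (r12 r (r23 r t))) \<and>
     bij_betw r (X \<times> X) (X \<times> X) \<and>
     (\<forall>x \<in> X. bij_betw (lam r x) X X) \<and>
     (\<forall>y \<in> X. bij_betw (rho r y) X X)"

definition sigma :: "'a set \<Rightarrow> ('a \<times> 'a \<Rightarrow> 'a \<times> 'a) \<Rightarrow> 'a \<Rightarrow> 'a \<Rightarrow> 'a" where
  "sigma X r y x = lam r y (rho r (inv_into X (lam r x) y) x)"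

text \<open>Elements of the structure monoid A = <X | x + y = y + sigma_y(x)> are represented by
  words (lists over X); addition is concatenation.  The automorphisms sigma_a, lambda_a of (A,+)
  leave X invariant and act letterwise, so they are determined by (and represented by)
  their restrictions to X.\<close>

text \<open>sigma_{x1+...+xn} = sigma_{xn} ... sigma_{x1} (anti-morphism (A,+) -> Aut(A,+)).\<close>

definition sigW :: "'a set \<Rightarrow> ('a \<times> 'a \<Rightarrow> 'a \<times> 'a) \<Rightarrow> 'a list \<Rightarrow> 'a \<Rightarrow> 'a" where
  "sigW X r w = foldl (\<lambda>f x. sigma X r x \<circ> f) id w"

text \<open>lambda on words: x + w = x o lambda_x^{-1}(w), and lambda is a morphism from (A,o),
  so lambda_{x+w} = lambda_x lambda_{lambda_x^{-1}(w)}.\<close>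

fun lamW :: "'a set \<Rightarrow> ('a \<times> 'a \<Rightarrow> 'a \<times> 'a) \<Rightarrow> 'a list \<Rightarrow> 'a \<Rightarrow> 'a" where
  "lamW X r [] = id"
| "lamW X r (x # w) = lam r x \<circ> lamW X r (map (inv_into X (lam r x)) w)"

definition sigA :: "'a set \<Rightarrow> ('a \<times> 'a \<Rightarrow> 'a \<times> 'a) \<Rightarrow> 'a list \<Rightarrow> 'a \<Rightarrow> 'a" where
  "sigA X r a = restrict (sigW X r a) X"

definition lamA :: "'a set \<Rightarrow> ('a \<times> 'a \<Rightarrow> 'a \<times> 'a) \<Rightarrow> 'a list \<Rightarrow> 'a \<Rightarrow> 'a" where
  "lamA X r a = restrict (lamW X r a) X"

definition gamA :: "'a set \<Rightarrow> ('a \<times> 'a \<Rightarrow> 'a \<times> 'a) \<Rightarrow> 'a list \<Rightarrow> ('a \<Rightarrow> 'a) \<times> ('a \<Rightarrow> 'a)" where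
  "gamA X r a = (restrict (inv_into X (sigW X r a)) X, lamA X r a)"

definition circA :: "'a set \<Rightarrow> ('a \<times> 'a \<Rightarrow> 'a \<times> 'a) \<Rightarrow> 'a list \<Rightarrow> 'a list \<Rightarrow> 'a list" where
  "circA X r a b = a @ map (lamW X r a) b"

definition actS :: "'a set \<Rightarrow> ('a \<times> 'a \<Rightarrow> 'a \<times> 'a) \<Rightarrow> 'a list \<Rightarrow> 'a list \<Rightarrow> 'a \<Rightarrow> 'a" where
  "actS X r a b = restrict (sigW X r a \<circ> lamW X r b) X"

end

theory Submission
  imports Defs
begin

lemma r_eq: "r p = (lam r (fst p) (snd p), rho r (snd p) (fst p))"
  by (simp add: lam_def rho_def)

lemma closed:
  assumes "nondegenerate_solution X r" "x \<in> X" "y \<in> X"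
  shows "lam r x y \<in> X" "rho r y x \<in> X"
proof -
  have "r (x,y) \<in> X \<times> X" using assms unfolding nondegenerate_solution_def by auto
  then show "lam r x y \<in> X" "rho r y x \<in> X" by (auto simp: lam_def rho_def mem_Times_iff)
qed

lemma braid:
  assumes "nondegenerate_solution X r" "x \<in> X" "y \<in> X" "z \<in> X"
  shows "lam r x (lam r y z) = lam r (lam r x y) (lam r (rho r y x) z)"
    "rho r (lam r (rho r y x) z) (lam r x y) = lam r (rho r (lam r y z) x) (rho r z y)"
proof -
  have "r12 r (r23 r (r12 r (x,y,z))) = r23 r (r12 r (r23 r (x,y,z)))"
    using assms unfolding nondegenerate_solution_def by auto
  then have "(lam r (lam r x y) (lam r (rho r y x) z), rho r (lam r (rho r y x) z) (lam r x y), rho r z (rho r y x))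
     = (lam r x (lam r y z), lam r (rho r (lam r y z) x) (rho r z y), rho r (rho r z y) (rho r (lam r y z) x))"
    by (simp add: r12_def r23_def r_eq[of r])
  then show "lam r x (lam r y z) = lam r (lam r x y) (lam r (rho r y x) z)"
    "rho r (lam r (rho r y x) z) (lam r x y) = lam r (rho r (lam r y z) x) (rho r z y)" by auto
qed

lemma lam_bij: "nondegenerate_solution X r \<Longrightarrow> x \<in> X \<Longrightarrow> bij_betw (lam r x) X X"
  unfolding nondegenerate_solution_def by auto

lemma linv:
  assumes "nondegenerate_solution X r" "x \<in> X" "y \<in> X"
  shows "inv_into X (lam r x) y \<in> X" "lam r x (inv_into X (lam r x) y) = y"
    "inv_into X (lam r x) (lam r x y) = y"
  using lam_bij[OF assms(1,2)] assms(3)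
  by (auto simp: bij_betw_def intro: inv_into_into inv_into_f_f f_inv_into_f)

lemma sigma_closed:
  assumes "nondegenerate_solution X r" "y \<in> X" "z \<in> X"
  shows "sigma X r y z \<in> X"
  unfolding sigma_def using assms by (simp add: closed linv)

lemma sigma_inj:
  assumes ns: "nondegenerate_solution X r" and y: "y \<in> X"
  shows "inj_on (sigma X r y) X"
proof
  fix z1 z2 assume z: "z1 \<in> X" "z2 \<in> X" "sigma X r y z1 = sigma X r y z2"
  define w1 where "w1 = inv_into X (lam r z1) y"
  define w2 where "w2 = inv_into X (lam r z2) y"
  have w: "w1 \<in> X" "w2 \<in> X" "lam r z1 w1 = y" "lam r z2 w2 = y"
    using linv[OF ns] z y unfolding w1_def w2_def by auto
  have "rho r w1 z1 \<in> X" "rho r w2 z2 \<in> X" using closed[OF ns] w z by auto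
  moreover have "lam r y (rho r w1 z1) = lam r y (rho r w2 z2)"
    using z(3) unfolding sigma_def w1_def w2_def .
  ultimately have "rho r w1 z1 = rho r w2 z2"
    using lam_bij[OF ns y] unfolding bij_betw_def inj_on_def by blast
  then have "r (z1,w1) = r (z2,w2)" using w by (simp add: r_eq[of r])
  moreover have "inj_on r (X \<times> X)" using ns unfolding nondegenerate_solution_def bij_betw_def by auto
  ultimately show "z1 = z2" using z w unfolding inj_on_def by blast
qed

lemma sigma_bij:
  assumes "finite X" "nondegenerate_solution X r" "y \<in> X"
  shows "bij_betw (sigma X r y) X X"
  unfolding bij_betw_def
  using sigma_inj[OF assms(2,3)] endo_inj_surj[OF assms(1)] sigma_closed[OF assms(2,3)] by blast

lemma sigma_lam:
  assumes ns: "nondegenerate_solution X r" and xyz: "x \<in> X" "y \<in> X" "z \<in> X"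
  shows "lam r x (sigma X r y z) = sigma X r (lam r x y) (lam r x z)"
proof -
  define w where "w = inv_into X (lam r z) y"
  have w: "w \<in> X" "lam r z w = y" using linv[OF ns] xyz unfolding w_def by auto
  have w'X: "lam r (rho r z x) w \<in> X" using closed[OF ns] xyz w by auto
  have "lam r (lam r x z) (lam r (rho r z x) w) = lam r x y"
    using braid(1)[OF ns xyz(1,3) w(1)] w by simp
  then have w': "inv_into X (lam r (lam r x z)) (lam r x y) = lam r (rho r z x) w"
    using linv(3)[OF ns _ w'X] closed[OF ns] xyz by metis
  have "lam r x (sigma X r y z) = lam r x (lam r y (rho r w z))"
    unfolding sigma_def w_def ..
  also have "\<dots> = lam r (lam r x y) (lam r (rho r y x) (rho r w z))"
    using braid(1)[OF ns xyz(1,2)] closed[OF ns] w xyz by simp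
  also have "lam r (rho r y x) (rho r w z) = rho r (lam r (rho r z x) w) (lam r x z)"
    using braid(2)[OF ns xyz(1,3) w(1)] w by simp
  finally show ?thesis unfolding sigma_def w' .
qed


lemma lamW_closed:
  "nondegenerate_solution X r \<Longrightarrow> b \<in> lists X \<Longrightarrow> z \<in> X \<Longrightarrow> lamW X r b z \<in> X"
proof (induction X r b arbitrary: z rule: lamW.induct)
  case (1 X r) then show ?case by simp
next
  case (2 X r x w)
  have "map (inv_into X (lam r x)) w \<in> lists X" using 2(3) linv(1)[OF 2(2)] by auto
  then show ?case using 2 closed(1)[OF 2(2)] by auto
qed

lemma lamW_bij:
  "nondegenerate_solution X r \<Longrightarrow> b \<in> lists X \<Longrightarrow> bij_betw (lamW X r b) X X"
proof (induction X r b rule: lamW.induct)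
  case (1 X r) then show ?case by (simp add: bij_betw_def)
next
  case (2 X r x w)
  have "map (inv_into X (lam r x)) w \<in> lists X" using 2(3) linv(1)[OF 2(2)] by auto
  then have "bij_betw (lam r x \<circ> lamW X r (map (inv_into X (lam r x)) w)) X X"
    using 2 lam_bij[OF 2(2)] by (auto intro: bij_betw_trans)
  then show ?case by (simp add: comp_def)
qed

lemma lamW_app:
  "nondegenerate_solution X r \<Longrightarrow> b \<in> lists X \<Longrightarrow> d \<in> lists X \<Longrightarrow> z \<in> X
   \<Longrightarrow> lamW X r (b @ map (lamW X r b) d) z = lamW X r b (lamW X r d z)"
proof (induction X r b arbitrary: d z rule: lamW.induct)
  case (1 X r) then show ?case by (simp add: id_def)
next
  case (2 X r x w)
  define b' where "b' = map (inv_into X (lam r x)) w"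
  have b': "b' \<in> lists X" using 2(3) linv(1)[OF 2(2)] unfolding b'_def by auto
  have "\<forall>e\<in>set d. inv_into X (lam r x) (lam r x (lamW X r b' e)) = lamW X r b' e"
    using 2(3,4) lamW_closed[OF 2(2) b'] linv(3)[OF 2(2)] by auto
  then have m: "map (inv_into X (lam r x) \<circ> (lam r x \<circ> lamW X r (map (inv_into X (lam r x)) w))) d
       = map (lamW X r (map (inv_into X (lam r x)) w)) d"
    unfolding b'_def by (simp add: map_eq_conv)
  have "lamW X r (x # w @ map (lamW X r (x # w)) d) z
      = lam r x (lamW X r (map (inv_into X (lam r x)) w @ map (inv_into X (lam r x) \<circ> (lam r x \<circ> lamW X r (map (inv_into X (lam r x)) w))) d) z)"
    by simp
  also have "\<dots> = lam r x (lamW X r (b' @ map (lamW X r b') d) z)" unfolding m b'_def ..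
  also have "\<dots> = lam r x (lamW X r b' (lamW X r d z))" using 2(1)[of d z] 2 b' by (simp add: b'_def)
  finally have F: "lamW X r (x # w @ map (lamW X r (x # w)) d) z = lam r x (lamW X r b' (lamW X r d z))" .
  show ?case using F unfolding b'_def by (simp only: append_Cons lamW.simps comp_def)
qed

lemma sig_lamW:
  "nondegenerate_solution X r \<Longrightarrow> b \<in> lists X \<Longrightarrow> y \<in> X \<Longrightarrow> z \<in> X
   \<Longrightarrow> sigma X r (lamW X r b y) (lamW X r b z) = lamW X r b (sigma X r y z)"
proof (induction X r b arbitrary: y z rule: lamW.induct)
  case (1 X r) then show ?case by simp
next
  case (2 X r x w)
  define b' where "b' = map (inv_into X (lam r x)) w"
  have b': "b' \<in> lists X" using 2(3) linv(1)[OF 2(2)] unfolding b'_def by auto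
  have "sigma X r (lamW X r (x#w) y) (lamW X r (x#w) z)
     = sigma X r (lam r x (lamW X r b' y)) (lam r x (lamW X r b' z))" by (simp add: b'_def)
  also have "\<dots> = lam r x (sigma X r (lamW X r b' y) (lamW X r b' z))"
    using sigma_lam[OF 2(2)] lamW_closed[OF 2(2) b'] 2 by simp
  also have "\<dots> = lam r x (lamW X r b' (sigma X r y z))"
    using 2(1) 2 b' by (simp add: b'_def)
  finally show ?case by (simp add: b'_def)
qed

lemma sigW_gen: "foldl (\<lambda>f x. sigma X r x \<circ> f) (g::'a\<Rightarrow>'a) w = sigW X r w \<circ> g"
  unfolding sigW_def
proof (induction w arbitrary: g)
  case Nil then show ?case by simp
next
  case (Cons a w)
  show ?case using Cons[of "sigma X r a \<circ> g"] Cons[of "sigma X r a"] by (simp add: comp_assoc)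
qed

lemma sigW_Cons: "sigW X r (x # w) = sigW X r w \<circ> sigma X r x"
  using sigW_gen[of X r "sigma X r x" w] by (simp add: sigW_def)

lemma sigW_app: "sigW X r (u @ v) = sigW X r v \<circ> sigW X r u"
  using sigW_gen[of X r "sigW X r u" v] by (simp add: sigW_def)

lemma sigW_Nil: "sigW X r [] = id" by (simp add: sigW_def)

lemma sigW_closed:
  "nondegenerate_solution X r \<Longrightarrow> c \<in> lists X \<Longrightarrow> z \<in> X \<Longrightarrow> sigW X r c z \<in> X"
  by (induction c arbitrary: z) (auto simp: sigW_Cons sigW_Nil sigma_closed)

lemma sigW_bij:
  "finite X \<Longrightarrow> nondegenerate_solution X r \<Longrightarrow> c \<in> lists X \<Longrightarrow> bij_betw (sigW X r c) X X"
proof (induction c)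
  case Nil then show ?case by (simp add: sigW_def bij_betw_def)
next
  case (Cons a c)
  then have "bij_betw (sigW X r c \<circ> sigma X r a) X X" by (auto intro: bij_betw_trans sigma_bij)
  then show ?case by (simp add: sigW_Cons comp_def)
qed

lemma sigW_lamW:
  "nondegenerate_solution X r \<Longrightarrow> b \<in> lists X \<Longrightarrow> c \<in> lists X \<Longrightarrow> z \<in> X
   \<Longrightarrow> sigW X r (map (lamW X r b) c) (lamW X r b z) = lamW X r b (sigW X r c z)"
proof (induction c arbitrary: z)
  case Nil then show ?case by (simp add: sigW_def)
next
  case (Cons y c)
  then show ?case by (simp add: sigW_Cons sig_lamW sigma_closed)
qed

theorem lemma2p3:
  fixes X :: "'a set" and r :: "'a \<times> 'a \<Rightarrow> 'a \<times> 'a"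
  assumes "finite X" and "nondegenerate_solution X r"
  shows "(\<forall>a\<in>lists X. \<forall>b\<in>lists X. \<forall>c\<in>lists X. \<forall>d\<in>lists X.
            sigA X r a = sigA X r c \<and> gamA X r b = gamA X r d \<longrightarrow> actS X r a b = actS X r c d)
       \<and> (\<forall>a\<in>lists X. \<forall>b\<in>lists X. actS X r a b \<in> carrier (BijGroup X))
       \<and> (\<forall>a\<in>lists X. \<forall>b\<in>lists X. \<forall>c\<in>lists X. \<forall>d\<in>lists X.
            actS X r (map (lamW X r b) c @ a) (circA X r b d)
              = actS X r a b \<otimes>\<^bsub>BijGroup X\<^esub> actS X r c d)"
proof (intro conjI ballI impI)
  fix a b c d assume l: "a \<in> lists X" "b \<in> lists X" "c \<in> lists X" "d \<in> lists X"
    and e: "sigA X r a = sigA X r c \<and> gamA X r b = gamA X r d"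
  show "actS X r a b = actS X r c d"
  proof
    fix x show "actS X r a b x = actS X r c d x"
    proof (cases "x \<in> X")
      case True
      have "lamA X r b x = lamA X r d x" using e by (simp add: gamA_def)
      then have 1: "lamW X r b x = lamW X r d x" using True by (simp add: lamA_def)
      have "lamW X r b x \<in> X" using lamW_closed[OF assms(2) l(2) True] .
      then have "sigW X r a (lamW X r b x) = sigW X r c (lamW X r b x)"
        using e unfolding sigA_def by (metis restrict_apply')
      then show ?thesis using True 1 by (simp add: actS_def)
    qed (simp add: actS_def)
  qed
next
  fix a b assume l: "a \<in> lists X" "b \<in> lists X"
  show "actS X r a b \<in> carrier (BijGroup X)"
    using bij_betw_trans[OF lamW_bij[OF assms(2) l(2)] sigW_bij[OF assms l(1)]]
    by (simp add: actS_def BijGroup_def Bij_def)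
next
  fix a b c d assume l: "a \<in> lists X" "b \<in> lists X" "c \<in> lists X" "d \<in> lists X"
  have B: "actS X r a b \<in> Bij X" "actS X r c d \<in> Bij X"
    using bij_betw_trans[OF lamW_bij[OF assms(2) l(2)] sigW_bij[OF assms l(1)]]
      bij_betw_trans[OF lamW_bij[OF assms(2) l(4)] sigW_bij[OF assms l(3)]]
    by (simp_all add: actS_def Bij_def)
  show "actS X r (map (lamW X r b) c @ a) (circA X r b d)
              = actS X r a b \<otimes>\<^bsub>BijGroup X\<^esub> actS X r c d"
  proof -
    have "actS X r (map (lamW X r b) c @ a) (circA X r b d) = compose X (actS X r a b) (actS X r c d)"
    proof
      fix x show "actS X r (map (lamW X r b) c @ a) (circA X r b d) x = compose X (actS X r a b) (actS X r c d) x"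
      proof (cases "x \<in> X")
        case True
        have d: "lamW X r d x \<in> X" using lamW_closed[OF assms(2) l(4) True] .
        have s: "sigW X r c (lamW X r d x) \<in> X" using sigW_closed[OF assms(2) l(3) d] .
        show ?thesis using True d s
          by (simp add: actS_def compose_def circA_def sigW_app lamW_app[OF assms(2) l(2) l(4) True]
              sigW_lamW[OF assms(2) l(2) l(3) d])
      qed (simp add: actS_def compose_def)
    qed
    then show ?thesis using B by (simp add: BijGroup_def)
  qed
qed

end
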